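(* There exist ten IGL environments $E_0,\dots,E_9$ with the following properties. All share the same context space $\mathcal X$, context distribution $d_0$, action set $\mathcal A=\{0,\dots,9\}$ and reward: there is a labeling $\ell:\mathcal X\to\{0,\dots,9\}$ with $\Pr_{x\sim d_0}[\ell(x)=j]=1/10$ for each $j$, and $r=\mathbf 1\{a=\ell(x)\}$. The feedback space is a disjoint union $\mathcal Y=\mathcal Y_0\sqcup\dots\sqcup\mathcal Y_9$ with a probability distribution $\nu_j$ on each $\mathcal Y_j$; in environment $E_i$, $y\mid r=1\sim\nu_i$ and $y\mid r=0\sim\frac19\sum_{j\ne i}\nu_j$, independently of $(x,a)$. Then: (i) each $E_i$ satisfies Assumption 1, and, with $\Pi$ the class of all policies, $\pi_u$ the uniform policy and any decoder class $\Psi$ containing the indicators $\mathbf 1_{\mathcal Y_0},\dots,\mathbf 1_{\mathcal Y_9}$, Assumption 2 holds (e.g. with $\eta=0.8$); (ii) when actions are chosen by $\pi_u$, the marginal distribution of $y$ is the same ($\frac1{10}\sum_j\nu_j$) in all ten environments; (iii) for every decoder $\psi:\mathcal Y\to[0,1]$ (the same decoder being used in all environments, as any method depending only on the marginal law of $y$ must do), there exists $i\in\{0,\dots,9\}$ and a policy $\hat\pi$ that maximizes the decoded reward $V_i(\pi,\psi)$ over all policies in environment $E_i$ and satisfies $V_i(\hat\pi)=0$, while $\max_\pi V_i(\pi)=1$; hence $V_i(\pi^\star)-V_i(\hat\pi)=\Omega(1)$.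
   Context: IGL setting: contexts $x\sim d_0$, finite action set, latent reward $r\in\{0,1\}$ and feedback $y$ drawn given $(x,a)$; for environment $E_i$, $V_i(\pi)=\mathbb E_{x\sim d_0,a\sim\pi(\cdot|x)}[r]$ and $V_i(\pi,\psi)=\mathbb E_{x\sim d_0,a\sim\pi(\cdot|x)}[\psi(y)]$ computed in $E_i$. Assumption 1 (conditional independence): there are distributions $Q_0,Q_1$ on $\mathcal Y$ with $y\mid(x,a,r)\sim Q_r$; $\Delta\psi:=\mathbb E_{Q_1}[\psi]-\mathbb E_{Q_0}[\psi]$. Assumption 2 (identifiability): with $\pi^\star\in\arg\max_{\pi\in\Pi}V(\pi)$ and $\psi^\star\in\arg\max_{\psi\in\Psi}\Delta\psi$, there is $\eta>0$ with $(V(\pi^\star)-V(\pi_u))\Delta\psi^\star\ge V(\pi_u)+\eta$, where $\pi_u$ is the uniform policy. *)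

theory Defs
  imports "HOL-Probability.Probability"
begin

text \<open>IGL with action set A = {0..<10} (actions are naturals below 10).
  An environment is given by a context distribution d0, a reward function
  rew x a (deterministic, 0/1-valued) and a feedback kernel K x a, the law of y
  given (x,a).\<close>

definition policy :: "'x measure \<Rightarrow> ('x \<Rightarrow> nat \<Rightarrow> real) \<Rightarrow> bool" where
  "policy d0 p \<longleftrightarrow> (\<forall>a. (\<lambda>x. p x a) \<in> borel_measurable d0)
      \<and> (\<forall>x a. 0 \<le> p x a) \<and> (\<forall>x. (\<Sum>a<10. p x a) = 1)"

definition unif_policy :: "'x \<Rightarrow> nat \<Rightarrow> real" where
  "unif_policy x a = 1 / 10"

definition Vr :: "'x measure \<Rightarrow> ('x \<Rightarrow> nat \<Rightarrow> real) \<Rightarrow> ('x \<Rightarrow> nat \<Rightarrow> real) \<Rightarrow> real" where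
  "Vr d0 rew p = (\<integral>x. (\<Sum>a<10. p x a * rew x a) \<partial>d0)"

definition Vdec :: "'x measure \<Rightarrow> ('x \<Rightarrow> nat \<Rightarrow> 'y measure) \<Rightarrow> ('x \<Rightarrow> nat \<Rightarrow> real)
                    \<Rightarrow> ('y \<Rightarrow> real) \<Rightarrow> real" where
  "Vdec d0 K p psi = (\<integral>x. (\<Sum>a<10. p x a * (\<integral>y. psi y \<partial>(K x a))) \<partial>d0)"

definition marg_y :: "'x measure \<Rightarrow> ('x \<Rightarrow> nat \<Rightarrow> 'y measure) \<Rightarrow> ('x \<Rightarrow> nat \<Rightarrow> real)
                    \<Rightarrow> 'y set \<Rightarrow> real" where
  "marg_y d0 K p A = (\<integral>x. (\<Sum>a<10. p x a * measure (K x a) A) \<partial>d0)"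

definition decoder :: "'y measure \<Rightarrow> ('y \<Rightarrow> real) \<Rightarrow> bool" where
  "decoder Y psi \<longleftrightarrow> psi \<in> borel_measurable Y \<and> (\<forall>y. 0 \<le> psi y \<and> psi y \<le> 1)"

definition Delta :: "'y measure \<Rightarrow> 'y measure \<Rightarrow> ('y \<Rightarrow> real) \<Rightarrow> real" where
  "Delta Q0 Q1 psi = (\<integral>y. psi y \<partial>Q1) - (\<integral>y. psi y \<partial>Q0)"

text \<open>Assumption 1 (conditional independence) with witnesses Q0, Q1:
  y | (x,a,r) ~ Q_r.  Since r = rew x a is deterministic given (x,a),
  this says the law of y given (x,a) is Q_{rew x a}.\<close>
definition assumption1 :: "'x measure \<Rightarrow> 'y measure \<Rightarrow> ('x \<Rightarrow> nat \<Rightarrow> real)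
      \<Rightarrow> ('x \<Rightarrow> nat \<Rightarrow> 'y measure) \<Rightarrow> 'y measure \<Rightarrow> 'y measure \<Rightarrow> bool" where
  "assumption1 d0 Y rew K Q0 Q1 \<longleftrightarrow>
     prob_space Q0 \<and> prob_space Q1 \<and> sets Q0 = sets Y \<and> sets Q1 = sets Y \<and>
     (\<forall>x\<in>space d0. \<forall>a<10. K x a = (if rew x a = 1 then Q1 else Q0))"

definition assumption2 :: "'x measure \<Rightarrow> ('x \<Rightarrow> nat \<Rightarrow> real) \<Rightarrow> 'y measure \<Rightarrow> 'y measure
      \<Rightarrow> ('x \<Rightarrow> nat \<Rightarrow> real) set \<Rightarrow> ('y \<Rightarrow> real) set \<Rightarrow> real \<Rightarrow> bool" where
  "assumption2 d0 rew Q0 Q1 PP Psi eta \<longleftrightarrow> eta > 0 \<and>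
     (\<exists>pistar\<in>PP. \<exists>psistar\<in>Psi.
        (\<forall>p\<in>PP. Vr d0 rew p \<le> Vr d0 rew pistar) \<and>
        (\<forall>psi\<in>Psi. Delta Q0 Q1 psi \<le> Delta Q0 Q1 psistar) \<and>
        (Vr d0 rew pistar - Vr d0 rew unif_policy) * Delta Q0 Q1 psistar
           \<ge> Vr d0 rew unif_policy + eta)"

definition lab_rew :: "('x \<Rightarrow> nat) \<Rightarrow> 'x \<Rightarrow> nat \<Rightarrow> real" where
  "lab_rew l x a = (if a = l x then 1 else 0)"

definition mixQ0 :: "'y measure \<Rightarrow> (nat \<Rightarrow> 'y measure) \<Rightarrow> nat \<Rightarrow> 'y measure" where
  "mixQ0 Y nu i = measure_of (space Y) (sets Y)
      (\<lambda>A. (\<Sum>j\<in>{0..<10} - {i}. emeasure (nu j) A) / 9)"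

definition envK :: "('x \<Rightarrow> nat) \<Rightarrow> 'y measure \<Rightarrow> (nat \<Rightarrow> 'y measure) \<Rightarrow> nat
      \<Rightarrow> 'x \<Rightarrow> nat \<Rightarrow> 'y measure" where
  "envK l Y nu i x a = (if lab_rew l x a = 1 then nu i else mixQ0 Y nu i)"

end

theory Submission
  imports Defs
begin

lemma mix_emeasure:
  assumes ns: "\<forall>j<10. sets (nu j) = sets Y"
    and A: "A \<in> sets Y"
  shows "emeasure (mixQ0 Y nu i) A = (\<Sum>j\<in>{0..<10} - {i}. emeasure (nu j) A) / 9"
  unfolding mixQ0_def
proof (rule emeasure_measure_of_sigma[OF sets.sigma_algebra_axioms _ _ A])
  show "positive (sets Y) (\<lambda>A. (\<Sum>j\<in>{0..<10} - {i}. emeasure (nu j) A) / 9)"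
    unfolding positive_def by simp
  show "countably_additive (sets Y) (\<lambda>A. (\<Sum>j\<in>{0..<10} - {i}. emeasure (nu j) A) / 9)"
    unfolding countably_additive_def
  proof (intro allI impI)
    fix F :: "nat \<Rightarrow> _" assume F: "range F \<subseteq> sets Y" "disjoint_family F" "\<Union> (range F) \<in> sets Y"
    have e: "\<And>j. j \<in> {0..<10} - {i} \<Longrightarrow> (\<Sum>n. emeasure (nu j) (F n)) = emeasure (nu j) (\<Union> (range F))"
      using F ns by (intro suminf_emeasure) auto
    have "(\<Sum>n. (\<Sum>j\<in>{0..<10} - {i}. emeasure (nu j) (F n)) / 9)
        = (\<Sum>n. (\<Sum>j\<in>{0..<10} - {i}. emeasure (nu j) (F n))) / 9"
      by (simp add: divide_ennreal_def ennreal_suminf_cmult mult.commute)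
    also have "(\<Sum>n. (\<Sum>j\<in>{0..<10} - {i}. emeasure (nu j) (F n))) = (\<Sum>j\<in>{0..<10} - {i}. (\<Sum>n. emeasure (nu j) (F n)))"
      by (rule suminf_sum) (rule summableI)
    also have "\<dots> = (\<Sum>j\<in>{0..<10} - {i}. emeasure (nu j) (\<Union> (range F)))"
      using e by simp
    finally show "(\<Sum>n. (\<Sum>j\<in>{0..<10} - {i}. emeasure (nu j) (F n)) / 9) = (\<Sum>j\<in>{0..<10} - {i}. emeasure (nu j) (\<Union> (range F))) / 9" .
  qed
qed

lemma mix_sets: "sets (mixQ0 Y nu i) = sets Y" and mix_space: "space (mixQ0 Y nu i) = space Y"
  unfolding mixQ0_def by (simp_all add: sets.space_closed)

lemma meas_nu:
  assumes ns: "\<forall>j<10. sets (nu j) = sets Y"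
  shows "\<And>j f. j \<in> {0..<10} - {i} \<Longrightarrow> f \<in> borel_measurable Y \<Longrightarrow> f \<in> borel_measurable (nu j)"
proof -
  fix j f assume "j \<in> {0..<10} - {i}" "f \<in> borel_measurable Y"
  then show "f \<in> borel_measurable (nu j)" using ns measurable_cong_sets[of "nu j" Y borel borel] by auto
qed

lemma mix_nn_integral:
  assumes ns: "\<forall>j<10. sets (nu j) = sets Y"
    and f: "f \<in> borel_measurable Y"
  shows "(\<integral>\<^sup>+ y. f y \<partial>mixQ0 Y nu i) = (\<Sum>j\<in>{0..<10} - {i}. \<integral>\<^sup>+ y. f y \<partial>nu j) / 9"
proof -
  note mj = meas_nu[OF ns]
  show ?thesis using f
proof (induction rule: borel_measurable_induct)
  case (cong f g)
  have sp: "\<And>j. j \<in> {0..<10} - {i} \<Longrightarrow> space (nu j) = space Y"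
    using ns by (metis DiffD1 atLeastLessThan_iff sets_eq_imp_space_eq)
  have "(\<integral>\<^sup>+ y. f y \<partial>mixQ0 Y nu i) = (\<integral>\<^sup>+ y. g y \<partial>mixQ0 Y nu i)"
    using cong(3) by (intro nn_integral_cong) (simp add: mix_space)
  moreover have "\<And>j. j \<in> {0..<10} - {i} \<Longrightarrow> (\<integral>\<^sup>+ y. f y \<partial>nu j) = (\<integral>\<^sup>+ y. g y \<partial>nu j)"
    using cong(3) sp by (intro nn_integral_cong) simp
  ultimately show ?case using cong(4) by simp
next
  case (set A)
  have "\<And>j. j \<in> {0..<10} - {i} \<Longrightarrow> (\<integral>\<^sup>+ y. indicator A y \<partial>nu j) = emeasure (nu j) A"
    using ns set by (intro nn_integral_indicator) auto
  then show ?case using set mix_emeasure[OF ns set]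
    by (simp add: mix_sets)
next
  case (mult u c)
  have mu: "u \<in> borel_measurable (mixQ0 Y nu i)" using mult(2) measurable_cong_sets[OF mix_sets refl] by blast
  have "\<And>j. j \<in> {0..<10} - {i} \<Longrightarrow> (\<integral>\<^sup>+ y. c * u y \<partial>nu j) = c * (\<integral>\<^sup>+ y. u y \<partial>nu j)"
    using mj mult(2) by (intro nn_integral_cmult) auto
  then show ?case using mult(4) nn_integral_cmult[OF mu, of c]
    by (simp add: sum_distrib_left ennreal_times_divide)
next
  case (add u v)
  have mu: "u \<in> borel_measurable (mixQ0 Y nu i)" using add measurable_cong_sets[OF mix_sets refl] by blast
  have mv: "v \<in> borel_measurable (mixQ0 Y nu i)" using add measurable_cong_sets[OF mix_sets refl] by blast
  have "\<And>j. j \<in> {0..<10} - {i} \<Longrightarrow> (\<integral>\<^sup>+ y. v y + u y \<partial>nu j) = (\<integral>\<^sup>+ y. v y \<partial>nu j) + (\<integral>\<^sup>+ y. u y \<partial>nu j)"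
    using mj add by (intro nn_integral_add) auto
  then show ?case using add nn_integral_add[OF mv mu]
    by (simp add: sum.distrib divide_ennreal_def distrib_right)
next
  case (seq U)
  have mU: "\<And>k. U k \<in> borel_measurable (mixQ0 Y nu i)" using seq(1) measurable_cong_sets[OF mix_sets refl] by blast
  have mUj: "\<And>k j. j \<in> {0..<10} - {i} \<Longrightarrow> U k \<in> borel_measurable (nu j)" using seq(1) mj by auto
  have i1: "(\<integral>\<^sup>+ y. (SUP k. U k) y \<partial>mixQ0 Y nu i) = (SUP k. \<integral>\<^sup>+ y. U k y \<partial>mixQ0 Y nu i)"
    unfolding SUP_apply using nn_integral_monotone_convergence_SUP[OF seq(3) mU] by simp
  have i2: "\<And>j. j \<in> {0..<10} - {i} \<Longrightarrow> (\<integral>\<^sup>+ y. (SUP k. U k) y \<partial>nu j) = (SUP k. \<integral>\<^sup>+ y. U k y \<partial>nu j)"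
    unfolding SUP_apply using nn_integral_monotone_convergence_SUP[OF seq(3) mUj] by simp
  have inc: "\<And>j. j \<in> {0..<10} - {i} \<Longrightarrow> incseq (\<lambda>k. \<integral>\<^sup>+ y. U k y \<partial>nu j)"
    using seq(3) unfolding incseq_def by (auto intro!: nn_integral_mono simp: le_fun_def)
  have "(SUP k. \<integral>\<^sup>+ y. U k y \<partial>mixQ0 Y nu i) = (SUP k. (\<Sum>j\<in>{0..<10} - {i}. \<integral>\<^sup>+ y. U k y \<partial>nu j) / 9)"
    using seq.IH by simp
  also have "\<dots> = (SUP k. (\<Sum>j\<in>{0..<10} - {i}. \<integral>\<^sup>+ y. U k y \<partial>nu j)) / 9"
    by (simp add: SUP_divide_ennreal)
  also have "\<dots> = (\<Sum>j\<in>{0..<10} - {i}. SUP k. \<integral>\<^sup>+ y. U k y \<partial>nu j) / 9"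
    using ennreal_SUP_sum[of "{0..<10} - {i}" "\<lambda>j k. \<integral>\<^sup>+ y. U k y \<partial>nu j", OF inc] by simp
  finally show ?case using i1 i2 by simp
qed
qed

lemma mix_measure:
  assumes np: "\<forall>j<10. prob_space (nu j)" and ns: "\<forall>j<10. sets (nu j) = sets Y"
    and A: "A \<in> sets Y"
  shows "measure (mixQ0 Y nu i) A = (\<Sum>j\<in>{0..<10} - {i}. measure (nu j) A) / 9"
proof -
  have "\<And>j. j \<in> {0..<10} - {i} \<Longrightarrow> emeasure (nu j) A = ennreal (measure (nu j) A)"
    using np by (metis DiffD1 atLeastLessThan_iff prob_space_def finite_measure.emeasure_eq_measure)
  then have "emeasure (mixQ0 Y nu i) A = (\<Sum>j\<in>{0..<10} - {i}. ennreal (measure (nu j) A)) / 9"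
    using mix_emeasure[OF ns A] by simp
  also have "\<dots> = ennreal ((\<Sum>j\<in>{0..<10} - {i}. measure (nu j) A) / 9)"
    by (subst sum_ennreal) (auto simp: sum_nonneg divide_ennreal[symmetric])
  finally show ?thesis unfolding measure_def by (simp add: sum_nonneg)
qed

lemma mix_prob:
  assumes np: "\<forall>j<10. prob_space (nu j)" and ns: "\<forall>j<10. sets (nu j) = sets Y"
    and i: "i < (10::nat)"
  shows "prob_space (mixQ0 Y nu i)"
proof (rule prob_spaceI)
  have sp: "\<And>j. j \<in> {0..<10} - {i} \<Longrightarrow> space (nu j) = space Y"
    using ns by (metis DiffD1 atLeastLessThan_iff sets_eq_imp_space_eq)
  have "\<And>j. j \<in> {0..<10} - {i} \<Longrightarrow> emeasure (nu j) (space Y) = 1"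
    using np sp by (metis DiffD1 atLeastLessThan_iff prob_space.emeasure_space_1)
  then have "emeasure (mixQ0 Y nu i) (space Y) = (\<Sum>j\<in>{0..<10} - {i}. 1) / 9"
    using mix_emeasure[OF ns sets.top] by simp
  moreover have "card ({0..<10::nat} - {i}) = 9" using i by simp
  ultimately show "emeasure (mixQ0 Y nu i) (space (mixQ0 Y nu i)) = 1"
    by (simp add: mix_space)
qed

lemma mix_integral:
  assumes np: "\<forall>j<10. prob_space (nu j)" and ns: "\<forall>j<10. sets (nu j) = sets Y"
    and i: "i < (10::nat)" and psi: "decoder Y psi"
  shows "(\<integral>y. psi y \<partial>mixQ0 Y nu i) = (\<Sum>j\<in>{0..<10} - {i}. \<integral>y. psi y \<partial>nu j) / 9"
proof -
  note mj = meas_nu[OF ns]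
  have pm: "psi \<in> borel_measurable Y" and pb: "\<And>y. 0 \<le> psi y" "\<And>y. psi y \<le> 1"
    using psi unfolding decoder_def by auto
  have pM: "psi \<in> borel_measurable (mixQ0 Y nu i)" using pm measurable_cong_sets[OF mix_sets refl] by blast
  have ej: "\<And>j. j \<in> {0..<10} - {i} \<Longrightarrow> (\<integral>\<^sup>+ y. ennreal (psi y) \<partial>nu j) = ennreal (\<integral>y. psi y \<partial>nu j)"
  proof -
    fix j assume j: "j \<in> {0..<10} - {i}"
    then interpret P: prob_space "nu j" using np by auto
    have "integrable (nu j) psi"
      using pb mj[OF j pm] by (intro P.integrable_const_bound[where B=1]) auto
    then show "(\<integral>\<^sup>+ y. ennreal (psi y) \<partial>nu j) = ennreal (\<integral>y. psi y \<partial>nu j)"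
      using pb by (intro nn_integral_eq_integral) auto
  qed
  have "(\<integral>\<^sup>+ y. ennreal (psi y) \<partial>mixQ0 Y nu i) = (\<Sum>j\<in>{0..<10} - {i}. ennreal (\<integral>y. psi y \<partial>nu j)) / 9"
    using mix_nn_integral[OF ns, of "\<lambda>y. ennreal (psi y)" i] pm ej by simp
  also have "\<dots> = ennreal ((\<Sum>j\<in>{0..<10} - {i}. \<integral>y. psi y \<partial>nu j) / 9)"
    using pb by (subst sum_ennreal) (auto simp: sum_nonneg divide_ennreal[symmetric])
  finally have "(\<integral>\<^sup>+ y. ennreal (psi y) \<partial>mixQ0 Y nu i) = ennreal ((\<Sum>j\<in>{0..<10} - {i}. \<integral>y. psi y \<partial>nu j) / 9)" .
  moreover have "0 \<le> (\<Sum>j\<in>{0..<10} - {i}. \<integral>y. psi y \<partial>nu j) / 9"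
    using pb by (auto intro!: sum_nonneg)
  ultimately show ?thesis
    using integral_eq_nn_integral[OF pM] pb by simp
qed

lemma sum_delta10:
  assumes "k < (10::nat)"
  shows "(\<Sum>a<10. (if a = k then 1 else 0) * g a) = (g k :: real)"
proof -
  have "(\<Sum>a<10. (if a = k then 1 else 0) * g a) = (\<Sum>a<10. if a = k then g a else 0)"
    by (intro sum.cong) auto
  also have "\<dots> = g k" using assms by (simp add: sum.delta')
  finally show ?thesis .
qed

lemma sum_split10:
  assumes "k < (10::nat)"
  shows "(\<Sum>a<10. (f a::real)) = f k + (\<Sum>a\<in>{..<10}-{k}. f a)"
  using assms by (simp add: sum.remove)

lemma int_bound:
  assumes d0: "prob_space d0" and p: "policy d0 p" and g: "\<And>x a. g x a \<le> \<beta>" and b: "0 \<le> \<beta>"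
  shows "(\<integral>x. (\<Sum>a<10. p x a * g x a) \<partial>d0) \<le> \<beta>"
proof -
  interpret prob_space d0 by fact
  have pt: "(\<Sum>a<10. p x a * g x a) \<le> \<beta>" for x
  proof -
    have "(\<Sum>a<10. p x a * g x a) \<le> (\<Sum>a<10. p x a * \<beta>)"
      using p g unfolding policy_def by (intro sum_mono mult_left_mono) auto
    also have "\<dots> = \<beta>" using p unfolding policy_def by (simp add: sum_distrib_right[symmetric])
    finally show ?thesis .
  qed
  show ?thesis
  proof (cases "integrable d0 (\<lambda>x. \<Sum>a<10. p x a * g x a)")
    case True
    then show ?thesis using pt by (intro integral_le_const) auto
  next
    case False
    then show ?thesis using b by (simp add: not_integrable_integral_eq)
  qed
qed

lemma int_const_on:
  assumes d0: "prob_space d0" and f: "\<And>x. x \<in> space d0 \<Longrightarrow> f x = (c::real)"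
  shows "(\<integral>x. f x \<partial>d0) = c"
proof -
  interpret prob_space d0 by fact
  have "(\<integral>x. f x \<partial>d0) = (\<integral>x. c \<partial>d0)" using f by (intro Bochner_Integration.integral_cong) auto
  then show ?thesis by (simp add: prob_space)
qed

lemma ind_policy:
  assumes l_meas: "l \<in> measurable d0 (count_space UNIV)"
  shows "policy d0 (\<lambda>x a. if a = h (l x) mod 10 then 1 else 0)"
  unfolding policy_def
proof (intro conjI allI)
  fix a
  have "(\<lambda>x. (\<lambda>n. if a = h n mod 10 then 1 else (0::real)) (l x)) \<in> borel_measurable d0"
    by (rule measurable_compose[OF l_meas]) simp
  then show "(\<lambda>x. if a = h (l x) mod 10 then 1 else (0::real)) \<in> borel_measurable d0" by simp
next
  fix x a show "0 \<le> (if a = h (l x) mod 10 then 1 else (0::real))" by simp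
next
  fix x show "(\<Sum>a<10. if a = h (l x) mod 10 then 1 else (0::real)) = 1"
    by (simp add: sum.delta')
qed

theorem theorem3:
  fixes d0 :: "'x measure" and l :: "'x \<Rightarrow> nat"
    and Y :: "'y measure" and Yp :: "nat \<Rightarrow> 'y set" and nu :: "nat \<Rightarrow> 'y measure"
  assumes d0: "prob_space d0"
    and l_meas: "l \<in> measurable d0 (count_space UNIV)"
    and l_range: "\<forall>x\<in>space d0. l x < 10"
    and l_unif: "\<forall>j<10. measure d0 {x\<in>space d0. l x = j} = 1 / 10"
    and Yp_sets: "\<forall>j<10. Yp j \<in> sets Y"
    and Yp_disj: "disjoint_family_on Yp {0..<10}"
    and Yp_cover: "(\<Union>j<10. Yp j) = space Y"
    and nu_prob: "\<forall>j<10. prob_space (nu j)"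
    and nu_sets: "\<forall>j<10. sets (nu j) = sets Y"
    and nu_on: "\<forall>j<10. emeasure (nu j) (Yp j) = 1"
  shows
    \<comment> \<open>(i) Assumptions 1 and 2 (with eta = 0.8) for every environment\<close>
    "(\<forall>i<10. \<exists>Q0 Q1. assumption1 d0 Y (lab_rew l) (envK l Y nu i) Q0 Q1 \<and>
        (\<forall>Psi. (\<forall>j<10. indicator (Yp j) \<in> Psi) \<and> (\<forall>psi\<in>Psi. decoder Y psi) \<longrightarrow>
            assumption2 d0 (lab_rew l) Q0 Q1 {p. policy d0 p} Psi (4/5)))
     \<and>
    \<comment> \<open>(ii) the marginal law of y under the uniform policy is (1/10) sum_j nu_j in every environment\<close>
     (\<forall>i<10. \<forall>A\<in>sets Y.
        marg_y d0 (envK l Y nu i) unif_policy A = (\<Sum>j<10. measure (nu j) A) / 10)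
     \<and>
    \<comment> \<open>(iii) for every decoder some environment is fooled\<close>
     (\<forall>psi. decoder Y psi \<longrightarrow>
        (\<exists>i<10. \<exists>pihat. policy d0 pihat \<and>
           (\<forall>p. policy d0 p \<longrightarrow> Vdec d0 (envK l Y nu i) p psi \<le> Vdec d0 (envK l Y nu i) pihat psi) \<and>
           Vr d0 (lab_rew l) pihat = 0 \<and>
           (\<exists>pistar. policy d0 pistar \<and> Vr d0 (lab_rew l) pistar = 1 \<and>
              (\<forall>p. policy d0 p \<longrightarrow> Vr d0 (lab_rew l) p \<le> 1))))"

proof -
  interpret D: prob_space d0 by fact
  define pst where "pst = (\<lambda>x a. if a = id (l x) mod 10 then 1 else (0::real))"
  define pih where "pih = (\<lambda>x a. if a = Suc (l x) mod 10 then 1 else (0::real))"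
  have pst_pol: "policy d0 pst" unfolding pst_def by (rule ind_policy[OF l_meas])
  have pih_pol: "policy d0 pih" unfolding pih_def by (rule ind_policy[OF l_meas])
  have Vr_le: "\<forall>p. policy d0 p \<longrightarrow> Vr d0 (lab_rew l) p \<le> 1"
    unfolding Vr_def by (auto intro!: int_bound[OF d0] simp: lab_rew_def)
  have pst_val: "Vr d0 (lab_rew l) pst = 1"
    unfolding Vr_def pst_def
    by (rule int_const_on[OF d0]) (subst sum_delta10, use l_range in \<open>auto simp: lab_rew_def\<close>)
  have sne: "\<And>n::nat. Suc n mod 10 \<noteq> n" by presburger
  have pih_val: "Vr d0 (lab_rew l) pih = 0"
    unfolding Vr_def pih_def
    by (rule int_const_on[OF d0]) (subst sum_delta10, use sne in \<open>auto simp: lab_rew_def\<close>)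
  have unif_val: "Vr d0 (lab_rew l) unif_policy = 1/10"
    unfolding Vr_def
  proof (rule int_const_on[OF d0])
    fix x assume x: "x \<in> space d0"
    have "(\<Sum>a<10. unif_policy x a * lab_rew l x a) = (\<Sum>a<10. (if a = l x then 1 else 0) * (1/10::real))"
      by (intro sum.cong) (auto simp: unif_policy_def lab_rew_def)
    also have "\<dots> = 1/10" using l_range x by (subst sum_delta10) auto
    finally show "(\<Sum>a<10. unif_policy x a * lab_rew l x a) = 1/10" .
  qed
  have sp: "\<And>j. j < 10 \<Longrightarrow> space (nu j) = space Y"
    using nu_sets by (metis sets_eq_imp_space_eq)
  have zero: "measure (nu j) (Yp i) = 0" if "i < 10" "j < 10" "i \<noteq> j" for i j
  proof -
    interpret P: prob_space "nu j" using nu_prob \<open>j < 10\<close> by auto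
    have dj: "Yp i \<inter> Yp j = {}" using Yp_disj that unfolding disjoint_family_on_def by auto
    have si: "Yp i \<in> sets (nu j)" "Yp j \<in> sets (nu j)" using Yp_sets nu_sets that by auto
    have "measure (nu j) (Yp i \<union> Yp j) = measure (nu j) (Yp i) + measure (nu j) (Yp j)"
      using si dj by (rule P.finite_measure_Union)
    moreover have "measure (nu j) (Yp j) = 1" using nu_on \<open>j < 10\<close> by (simp add: measure_def)
    moreover have "measure (nu j) (Yp i \<union> Yp j) \<le> 1" by simp
    ultimately show ?thesis using measure_nonneg[of "nu j" "Yp i"] by linarith
  qed
  have P1: "\<forall>i<10. \<exists>Q0 Q1. assumption1 d0 Y (lab_rew l) (envK l Y nu i) Q0 Q1 \<and>
        (\<forall>Psi. (\<forall>j<10. indicator (Yp j) \<in> Psi) \<and> (\<forall>psi\<in>Psi. decoder Y psi) \<longrightarrow>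
            assumption2 d0 (lab_rew l) Q0 Q1 {p. policy d0 p} Psi (4/5))"
  proof (intro allI impI)
    fix i :: nat assume i: "i < 10"
    have A1: "assumption1 d0 Y (lab_rew l) (envK l Y nu i) (mixQ0 Y nu i) (nu i)"
      unfolding assumption1_def using mix_prob[OF nu_prob nu_sets i] nu_prob nu_sets i
      by (auto simp: mix_sets envK_def)
    have Dind: "Delta (mixQ0 Y nu i) (nu i) (indicator (Yp i)) = 1"
    proof -
      have Ys: "Yp i \<in> sets Y" using Yp_sets i by auto
      then have Ysub: "Yp i \<subseteq> space Y" by (rule sets.sets_into_space)
      have "measure (nu i) (Yp i) = 1" using nu_on i by (simp add: measure_def)
      moreover have "measure (mixQ0 Y nu i) (Yp i) = 0"
        using mix_measure[OF nu_prob nu_sets Ys, of i] zero[OF i] by (simp add: sum.neutral)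
      ultimately show ?thesis unfolding Delta_def using Ysub sp[OF i]
        by (simp add: mix_space Int_absorb2)
    qed
    have Dle: "Delta (mixQ0 Y nu i) (nu i) psi \<le> 1" if "decoder Y psi" for psi
    proof -
      interpret P: prob_space "nu i" using nu_prob i by auto
      have pm: "psi \<in> borel_measurable (nu i)" using that nu_sets i measurable_cong_sets[of "nu i" Y borel borel]
        unfolding decoder_def by auto
      have "integrable (nu i) psi" using that pm unfolding decoder_def
        by (intro P.integrable_const_bound[where B=1]) auto
      then have "(\<integral>y. psi y \<partial>nu i) \<le> 1" using that unfolding decoder_def
        by (intro P.integral_le_const) auto
      moreover have "0 \<le> (\<integral>y. psi y \<partial>mixQ0 Y nu i)" using that unfolding decoder_def
        by (intro integral_nonneg_AE) auto
      ultimately show ?thesis unfolding Delta_def by linarith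
    qed
    show "\<exists>Q0 Q1. assumption1 d0 Y (lab_rew l) (envK l Y nu i) Q0 Q1 \<and>
        (\<forall>Psi. (\<forall>j<10. indicator (Yp j) \<in> Psi) \<and> (\<forall>psi\<in>Psi. decoder Y psi) \<longrightarrow>
            assumption2 d0 (lab_rew l) Q0 Q1 {p. policy d0 p} Psi (4/5))"
    proof (intro exI conjI allI impI)
      show "assumption1 d0 Y (lab_rew l) (envK l Y nu i) (mixQ0 Y nu i) (nu i)" by (rule A1)
      fix Psi :: "('y \<Rightarrow> real) set"
      assume H: "(\<forall>j<10. indicator (Yp j) \<in> Psi) \<and> (\<forall>psi\<in>Psi. decoder Y psi)"
      show "assumption2 d0 (lab_rew l) (mixQ0 Y nu i) (nu i) {p. policy d0 p} Psi (4/5)"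
        unfolding assumption2_def
      proof (intro conjI bexI[of _ pst] bexI[of _ "indicator (Yp i)"])
        show "\<forall>p\<in>{p. policy d0 p}. Vr d0 (lab_rew l) p \<le> Vr d0 (lab_rew l) pst"
          using Vr_le pst_val by auto
        show "\<forall>psi\<in>Psi. Delta (mixQ0 Y nu i) (nu i) psi \<le> Delta (mixQ0 Y nu i) (nu i) (indicator (Yp i))"
          using H Dle Dind by auto
        show "Vr d0 (lab_rew l) unif_policy + 4 / 5 \<le> (Vr d0 (lab_rew l) pst - Vr d0 (lab_rew l) unif_policy) * Delta (mixQ0 Y nu i) (nu i) (indicator (Yp i))"
          using pst_val unif_val Dind by simp
      qed (use H i pst_pol in auto)
    qed
  qed
  have P2: "\<forall>i<10. \<forall>A\<in>sets Y.
        marg_y d0 (envK l Y nu i) unif_policy A = (\<Sum>j<10. measure (nu j) A) / 10"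
  proof (intro allI impI ballI)
    fix i :: nat and A assume i: "i < 10" and A: "A \<in> sets Y"
    have mm: "measure (mixQ0 Y nu i) A = (\<Sum>j\<in>{..<10} - {i}. measure (nu j) A) / 9"
      using mix_measure[OF nu_prob nu_sets A, of i] by (simp add: atLeast0LessThan)
    have tot: "(\<Sum>j<10. measure (nu j) A) = measure (nu i) A + (\<Sum>j\<in>{..<10} - {i}. measure (nu j) A)"
      using i by (rule sum_split10)
    show "marg_y d0 (envK l Y nu i) unif_policy A = (\<Sum>j<10. measure (nu j) A) / 10"
      unfolding marg_y_def
    proof (rule int_const_on[OF d0])
      fix x assume x: "x \<in> space d0"
      have lx: "l x < 10" using l_range x by auto
      have "(\<Sum>a<10. unif_policy x a * measure (envK l Y nu i x a) A)
          = unif_policy x (l x) * measure (envK l Y nu i x (l x)) A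
            + (\<Sum>a\<in>{..<10} - {l x}. unif_policy x a * measure (envK l Y nu i x a) A)"
        using lx by (rule sum_split10)
      also have "(\<Sum>a\<in>{..<10} - {l x}. unif_policy x a * measure (envK l Y nu i x a) A)
          = (\<Sum>a\<in>{..<10} - {l x}. 1/10 * measure (mixQ0 Y nu i) A)"
        by (intro sum.cong) (auto simp: unif_policy_def envK_def lab_rew_def)
      also have "\<dots> = 9 * (1/10 * measure (mixQ0 Y nu i) A)" using lx by simp
      finally show "(\<Sum>a<10. unif_policy x a * measure (envK l Y nu i x a) A) = (\<Sum>j<10. measure (nu j) A) / 10"
        using mm tot by (simp add: unif_policy_def envK_def lab_rew_def)
    qed
  qed
  have P3: "\<forall>psi. decoder Y psi \<longrightarrow>
        (\<exists>i<10. \<exists>pihat. policy d0 pihat \<and>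
           (\<forall>p. policy d0 p \<longrightarrow> Vdec d0 (envK l Y nu i) p psi \<le> Vdec d0 (envK l Y nu i) pihat psi) \<and>
           Vr d0 (lab_rew l) pihat = 0 \<and>
           (\<exists>pistar. policy d0 pistar \<and> Vr d0 (lab_rew l) pistar = 1 \<and>
              (\<forall>p. policy d0 p \<longrightarrow> Vr d0 (lab_rew l) p \<le> 1)))"
  proof (intro allI impI)
    fix psi assume psi: "decoder Y psi"
    define c where "c j = (\<integral>y. psi y \<partial>nu j)" for j
    have fin: "finite (c ` {0..<10::nat})" "c ` {0..<10::nat} \<noteq> {}" by auto
    obtain i where i: "i \<in> {0..<10::nat}" "c i = Min (c ` {0..<10})"
      using Min_in[OF fin] by (metis imageE)
    have imin: "\<And>j. j \<in> {0..<10} \<Longrightarrow> c i \<le> c j" using i fin by auto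
    define m where "m = (\<integral>y. psi y \<partial>mixQ0 Y nu i)"
    have m_eq: "m = (\<Sum>j\<in>{0..<10} - {i}. c j) / 9"
      unfolding m_def c_def using mix_integral[OF nu_prob nu_sets _ psi, of i] i by simp
    have "(\<Sum>j\<in>{0..<10} - {i}. c i) \<le> (\<Sum>j\<in>{0..<10} - {i}. c j)"
      using imin by (intro sum_mono) auto
    moreover have "card ({0..<10::nat} - {i}) = 9" using i by simp
    ultimately have cm: "c i \<le> m" unfolding m_eq by simp
    have m0: "0 \<le> m" unfolding m_def using psi unfolding decoder_def by (intro integral_nonneg_AE) auto
    have inner: "\<And>x a. (\<integral>y. psi y \<partial>envK l Y nu i x a) = (if a = l x then c i else m)"
      by (simp add: envK_def lab_rew_def c_def m_def)
    have Vd: "\<And>p. Vdec d0 (envK l Y nu i) p psi = (\<integral>x. (\<Sum>a<10. p x a * (if a = l x then c i else m)) \<partial>d0)"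
      unfolding Vdec_def inner ..
    have Vp: "Vdec d0 (envK l Y nu i) p psi \<le> m" if "policy d0 p" for p
      unfolding Vd using cm m0 by (intro int_bound[OF d0 that]) auto
    have Vh: "Vdec d0 (envK l Y nu i) pih psi = m"
      unfolding Vd pih_def
      by (rule int_const_on[OF d0]) (subst sum_delta10, use sne in auto)
    show "\<exists>i<10. \<exists>pihat. policy d0 pihat \<and>
           (\<forall>p. policy d0 p \<longrightarrow> Vdec d0 (envK l Y nu i) p psi \<le> Vdec d0 (envK l Y nu i) pihat psi) \<and>
           Vr d0 (lab_rew l) pihat = 0 \<and>
           (\<exists>pistar. policy d0 pistar \<and> Vr d0 (lab_rew l) pistar = 1 \<and>
              (\<forall>p. policy d0 p \<longrightarrow> Vr d0 (lab_rew l) p \<le> 1))"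
      using i pih_pol Vp Vh pih_val pst_pol pst_val Vr_le by auto
  qed
  show ?thesis using P1 P2 P3 by blast
qed

end
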